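(* Let $b\in\mathbb{R}$, $\lambda>0$, $E=\{x_2>0\}$, and let $S_b(-\lambda)$ be the integral operator on $L^2(E)$ with kernel $$S_b(-\lambda)(\mathbf{x},\mathbf{y})=\mathrm{e}^{\mathrm{i} b\phi(\mathbf{x},\mathbf{y})}\frac1{2\pi}\big(K_0(\sqrt\lambda|\mathbf{x}-\mathbf{y}|)-K_0(\sqrt\lambda|\mathbf{x}-\mathbf{y}^*|)\big).$$ Then $S_b(-\lambda)$ is a bounded self-adjoint operator on $L^2(E)$ and is also bounded as an operator from $L^2(E)$ to $L^\infty(E)$.
   Context: $\phi(\mathbf{x},\mathbf{y})=\tfrac12(y_1-x_1)(x_2+y_2)$, $\mathbf{y}^*=(y_1,-y_2)$, and $K_0$ is the Macdonald function (modified Bessel function of the second kind of order $0$). *)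

theory Defs
  imports "HOL-Analysis.Analysis"
begin

text \<open>Macdonald function K_0 via its standard integral representation (for r > 0):
  K_0(r) = integral over t in (0,inf) of exp(- r cosh t).\<close>
definition K0 :: "real \<Rightarrow> real" where
  "K0 r = (LBINT t:{0<..}. exp (- r * cosh t))"

definition halfplane :: "(real \<times> real) set" where
  "halfplane = {x. snd x > 0}"

definition phi :: "real \<times> real \<Rightarrow> real \<times> real \<Rightarrow> real" where
  "phi x y = (1/2) * (fst y - fst x) * (snd x + snd y)"

definition refl_star :: "real \<times> real \<Rightarrow> real \<times> real" where
  "refl_star y = (fst y, - snd y)"

definition Sb_kernel :: "real \<Rightarrow> real \<Rightarrow> real \<times> real \<Rightarrow> real \<times> real \<Rightarrow> complex" where
  "Sb_kernel b lam x y =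
     exp (\<i> * complex_of_real (b * phi x y)) *
     complex_of_real ((1 / (2 * pi)) *
        (K0 (sqrt lam * dist x y) - K0 (sqrt lam * dist x (refl_star y))))"

definition mE :: "(real \<times> real) measure" where
  "mE = restrict_space lborel halfplane"

definition L2 :: "(real \<times> real) measure \<Rightarrow> ((real \<times> real) \<Rightarrow> complex) set" where
  "L2 M = {f. f \<in> borel_measurable M \<and> integrable M (\<lambda>x. (cmod (f x))\<^sup>2)}"

definition L2norm :: "(real \<times> real) measure \<Rightarrow> ((real \<times> real) \<Rightarrow> complex) \<Rightarrow> real" where
  "L2norm M f = sqrt (\<integral>x. (cmod (f x))\<^sup>2 \<partial>M)"

definition intop :: "(real \<times> real) measure \<Rightarrow> (real \<times> real \<Rightarrow> real \<times> real \<Rightarrow> complex)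
    \<Rightarrow> ((real \<times> real) \<Rightarrow> complex) \<Rightarrow> (real \<times> real) \<Rightarrow> complex" where
  "intop M k f x = (\<integral>y. k x y * f y \<partial>M)"

definition bounded_L2_intop :: "(real \<times> real) measure \<Rightarrow> (real \<times> real \<Rightarrow> real \<times> real \<Rightarrow> complex) \<Rightarrow> bool" where
  "bounded_L2_intop M k \<longleftrightarrow> (\<exists>C. \<forall>f\<in>L2 M.
      (AE x in M. integrable M (\<lambda>y. k x y * f y)) \<and>
      intop M k f \<in> L2 M \<and> L2norm M (intop M k f) \<le> C * L2norm M f)"

definition selfadjoint_L2_intop :: "(real \<times> real) measure \<Rightarrow> (real \<times> real \<Rightarrow> real \<times> real \<Rightarrow> complex) \<Rightarrow> bool" where
  "selfadjoint_L2_intop M k \<longleftrightarrow> (\<forall>f\<in>L2 M. \<forall>g\<in>L2 M.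
      (\<integral>x. intop M k f x * cnj (g x) \<partial>M) = (\<integral>x. f x * cnj (intop M k g x) \<partial>M))"

definition bounded_L2_Linf_intop :: "(real \<times> real) measure \<Rightarrow> (real \<times> real \<Rightarrow> real \<times> real \<Rightarrow> complex) \<Rightarrow> bool" where
  "bounded_L2_Linf_intop M k \<longleftrightarrow> (\<exists>C. \<forall>f\<in>L2 M.
      (AE x in M. integrable M (\<lambda>y. k x y * f y)) \<and>
      intop M k f \<in> borel_measurable M \<and>
      (AE x in M. cmod (intop M k f x) \<le> C * L2norm M f))"

end

theory Submission
  imports Defs "HOL-Probability.Sinc_Integral"
begin


lemma powr_quarter_le_exp:
  fixes v :: real assumes "v > 0" shows "v powr (1/4) \<le> exp v"
proof (cases "v \<le> 1")
  case True
  then have "v powr (1/4) \<le> 1" using assms by (simp add: powr_le1)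
  also have "1 \<le> exp v" using assms by simp
  finally show ?thesis .
next
  case False
  then have "v powr (1/4) \<le> v powr 1" by (intro powr_mono) auto
  also have "\<dots> = v" using assms by simp
  also have "v \<le> exp v" using exp_ge_add_one_self[of v] by linarith
  finally show ?thesis .
qed

lemma exp_neg_le_powr:
  fixes v :: real assumes "v > 0" shows "exp (- v) \<le> v powr (-1/4)"
proof -
  have "exp (-v) = 1 / exp v" by (simp add: exp_minus field_simps)
  also have "\<dots> \<le> 1 / v powr (1/4)" using powr_quarter_le_exp[OF assms] assms
    by (intro divide_left_mono) auto
  also have "\<dots> = v powr (-1/4)" using assms by (simp add: powr_minus_divide)
  finally show ?thesis .
qed

lemma K0_integrand_bound:
  fixes r t :: real assumes "r > 0"
  shows "exp (- r * cosh t) \<le> exp (- r / 2) * (r/4) powr (-1/4) * exp (- (t * (1/4)))"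
proof -
  have c1: "cosh t \<ge> 1" by (rule cosh_real_ge_1)
  have c2: "cosh t \<ge> exp t / 2" unfolding cosh_def by (simp add: add_increasing2)
  have "exp (- r * cosh t) = exp (- (r/2) * cosh t) * exp (- (r/2) * cosh t)"
    by (simp flip: exp_add)
  also have "\<dots> \<le> exp (- r/2) * exp (- (r * exp t / 4))"
    using assms c1 c2 by (intro mult_mono) (auto simp: field_simps)
  also have "exp (- (r * exp t / 4)) \<le> (r * exp t / 4) powr (-1/4)"
    using assms by (intro exp_neg_le_powr) auto
  also have "(r * exp t / 4) powr (-1/4) = (r/4) powr (-1/4) * exp (- (t * (1/4)))"
  proof -
    have "(r * exp t / 4) = (r/4) * exp t" by simp
    then have "(r * exp t / 4) powr (-1/4) = (r/4) powr (-1/4) * (exp t) powr (-1/4)"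
      using assms by (metis powr_mult[of "r/4" "exp t"] \<open>(r * exp t / 4) = (r/4) * exp t\<close> divide_pos_pos exp_gt_zero less_eq_real_def zero_less_numeral)
    also have "(exp t) powr (-1/4) = exp (- (t * (1/4)))" by (simp add: powr_def)
    finally show ?thesis .
  qed
  finally show ?thesis using assms by (simp add: mult_left_mono mult.assoc)
qed

lemma borel_measurable_cosh[measurable]: "(cosh :: real \<Rightarrow> real) \<in> borel_measurable borel"
  by (intro borel_measurable_continuous_onI continuous_intros)

lemma K0_bound:
  fixes r :: real assumes r: "r > 0"
  shows "set_integrable lborel {0<..} (\<lambda>t. exp (- r * cosh t))"
    and "0 \<le> K0 r" and "K0 r \<le> 4 * (exp (- r / 2) * (r/4) powr (-1/4))"
proof -
  define C where "C = exp (- r / 2) * (r/4) powr (-1/4)"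
  have ie: "set_integrable lborel {0<..} (\<lambda>t::real. exp (- (t * (1/4::real))))"
    by (rule integrable_I0i_exp_mscale) simp
  have ib: "set_integrable lborel {0<..} (\<lambda>t. C * exp (- (t * (1/4))))"
    using ie by (intro set_integrable_mult_right) auto
  show i: "set_integrable lborel {0<..} (\<lambda>t. exp (- r * cosh t))"
  proof (rule set_integrable_bound[OF ib])
    show "set_borel_measurable lborel {0<..} (\<lambda>t. exp (- r * cosh t))"
      unfolding set_borel_measurable_def by measurable
    show "AE x in lborel. x \<in> {0<..} \<longrightarrow> norm (exp (- r * cosh x)) \<le> norm (C * exp (- (x * (1/4))))"
      using K0_integrand_bound[OF r] unfolding C_def by (auto intro!: AE_I2 simp: abs_mult)
  qed
  show "0 \<le> K0 r" unfolding K0_def set_lebesgue_integral_def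
    by (intro Bochner_Integration.integral_nonneg) (auto simp: indicator_def)
  have "K0 r \<le> (LINT t:{0<..}|lborel. C * exp (- (t * (1/4))))"
    unfolding K0_def using K0_integrand_bound[OF r]
    by (intro set_integral_mono[OF i ib]) (simp add: C_def)
  also have "\<dots> = C * 4"
    using LBINT_I0i_exp_mscale[of "1/4"] by (simp add: interval_lebesgue_integral_0_infty)
  finally show "K0 r \<le> 4 * (exp (- r / 2) * (r/4) powr (-1/4))" by (simp add: C_def)
qed




lemma borel_measurable_cnj'[measurable]: "(cnj :: complex \<Rightarrow> complex) \<in> borel_measurable borel"
  by (intro borel_measurable_continuous_onI continuous_intros)

lemma aux_mono3: "(a::real) \<le> h \<Longrightarrow> 0 \<le> F \<Longrightarrow> 0 \<le> G \<Longrightarrow> a * F * G \<le> G * (h * F)"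
proof -
  assume "a \<le> h" "0 \<le> F" "0 \<le> G"
  then have "a * F * G \<le> h * F * G" by (intro mult_right_mono) auto
  then show ?thesis by (simp add: ac_simps)
qed

locale kop = sigma_finite_measure M for M :: "(real \<times> real) measure" +
  fixes k :: "real \<times> real \<Rightarrow> real \<times> real \<Rightarrow> complex" and H :: "real \<times> real \<Rightarrow> real \<times> real \<Rightarrow> real"
    and A B :: real
  assumes kmeas[measurable]: "(\<lambda>(x,y). k x y) \<in> borel_measurable (M \<Otimes>\<^sub>M M)"
    and Hmeas[measurable]: "(\<lambda>(x,y). H x y) \<in> borel_measurable (M \<Otimes>\<^sub>M M)"
    and Hnn: "\<And>x y. 0 \<le> H x y"
    and kH: "\<And>x. x \<in> space M \<Longrightarrow> AE y in M. cmod (k x y) \<le> H x y"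
    and HA1: "\<And>x. x \<in> space M \<Longrightarrow> (\<integral>\<^sup>+y. ennreal (H x y) \<partial>M) \<le> ennreal A"
    and HA2: "\<And>y. y \<in> space M \<Longrightarrow> (\<integral>\<^sup>+x. ennreal (H x y) \<partial>M) \<le> ennreal A"
    and HB: "\<And>x. x \<in> space M \<Longrightarrow> (\<integral>\<^sup>+y. ennreal ((H x y)\<^sup>2) \<partial>M) \<le> ennreal B"
    and ksym: "\<And>x y. x \<in> space M \<Longrightarrow> y \<in> space M \<Longrightarrow> k y x = cnj (k x y)"
    and A0: "A \<ge> 0" and B0: "B \<ge> 0"
begin

interpretation P: pair_sigma_finite M M ..

lemma Hx_meas[measurable]: "x \<in> space M \<Longrightarrow> (\<lambda>y. H x y) \<in> borel_measurable M"
  using measurable_Pair2[OF Hmeas] by simp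

lemma kx_meas[measurable]: "x \<in> space M \<Longrightarrow> (\<lambda>y. k x y) \<in> borel_measurable M"
  using measurable_Pair2[OF kmeas] by simp

lemma L2D:
  assumes "f \<in> L2 M"
  shows "f \<in> borel_measurable M" and "integrable M (\<lambda>y. (cmod (f y))\<^sup>2)"
    and "(\<integral>\<^sup>+y. ennreal ((cmod (f y))\<^sup>2) \<partial>M) = ennreal (\<integral>y. (cmod (f y))\<^sup>2 \<partial>M)"
    and "(\<integral>y. (cmod (f y))\<^sup>2 \<partial>M) \<ge> 0"
    and "L2norm M f = sqrt (\<integral>y. (cmod (f y))\<^sup>2 \<partial>M)"
  using assms by (auto simp: L2_def L2norm_def intro!: nn_integral_eq_integral)

definition Tn where "Tn f x = (\<integral>\<^sup>+y. ennreal (H x y) * ennreal (cmod (f y)) \<partial>M)"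

lemma pointwise:
  assumes f: "f \<in> L2 M" and x: "x \<in> space M"
  shows "integrable M (\<lambda>y. k x y * f y)"
    and "ennreal (cmod (intop M k f x)) \<le> Tn f x"
    and "(Tn f x)\<^sup>2 \<le> ennreal B * ennreal (\<integral>y. (cmod (f y))\<^sup>2 \<partial>M)"
    and "(Tn f x)\<^sup>2 \<le> ennreal A * (\<integral>\<^sup>+y. ennreal (H x y) * ennreal ((cmod (f y))\<^sup>2) \<partial>M)"
proof -
  note fm[measurable] = L2D(1)[OF f]
  have cs1: "(Tn f x)\<^sup>2 \<le> (\<integral>\<^sup>+y. ennreal (H x y) ^ 2 \<partial>M) * (\<integral>\<^sup>+y. ennreal (cmod (f y)) ^ 2 \<partial>M)"
    unfolding Tn_def using x by (intro Cauchy_Schwarz_nn_integral) auto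
  also have "\<dots> = (\<integral>\<^sup>+y. ennreal ((H x y)\<^sup>2) \<partial>M) * (\<integral>\<^sup>+y. ennreal ((cmod (f y))\<^sup>2) \<partial>M)"
    by (simp add: ennreal_power Hnn)
  also have "\<dots> \<le> ennreal B * ennreal (\<integral>y. (cmod (f y))\<^sup>2 \<partial>M)"
    unfolding L2D(3)[OF f] by (intro mult_right_mono HB[OF x]) simp
  finally show TB: "(Tn f x)\<^sup>2 \<le> ennreal B * ennreal (\<integral>y. (cmod (f y))\<^sup>2 \<partial>M)" .
  moreover have "ennreal B * ennreal (\<integral>y. (cmod (f y))\<^sup>2 \<partial>M) < \<infinity>"
    by (simp add: ennreal_mult_less_top flip: ennreal_mult)
  ultimately have "(Tn f x)\<^sup>2 < \<infinity>" by (rule le_less_trans)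
  then have Tfin: "Tn f x < \<infinity>" by (simp add: power_less_top_ennreal)
  have le: "(\<integral>\<^sup>+y. ennreal (norm (k x y * f y)) \<partial>M) \<le> Tn f x"
    unfolding Tn_def
    by (intro nn_integral_mono_AE, use kH[OF x] in eventually_elim)
       (auto simp: norm_mult ennreal_mult'[symmetric] Hnn intro!: ennreal_leI mult_right_mono)
  show int: "integrable M (\<lambda>y. k x y * f y)"
    unfolding integrable_iff_bounded using x le Tfin by auto
  show "ennreal (cmod (intop M k f x)) \<le> Tn f x"
    unfolding intop_def using integral_norm_bound_ennreal[OF int] le by (rule order_trans)
  have "(Tn f x)\<^sup>2 = (\<integral>\<^sup>+y. ennreal (sqrt (H x y)) * (ennreal (sqrt (H x y)) * ennreal (cmod (f y))) \<partial>M)\<^sup>2"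
    unfolding Tn_def
    by (intro arg_cong[where f="\<lambda>t. t^2"] nn_integral_cong)
       (simp add: mult.assoc[symmetric] ennreal_mult'[symmetric] Hnn)
  also have "\<dots> \<le> (\<integral>\<^sup>+y. ennreal (sqrt (H x y)) ^ 2 \<partial>M) * (\<integral>\<^sup>+y. (ennreal (sqrt (H x y)) * ennreal (cmod (f y))) ^ 2 \<partial>M)"
    using x by (intro Cauchy_Schwarz_nn_integral) auto
  also have "\<dots> = (\<integral>\<^sup>+y. ennreal (H x y) \<partial>M) * (\<integral>\<^sup>+y. ennreal (H x y) * ennreal ((cmod (f y))\<^sup>2) \<partial>M)"
    by (intro arg_cong2[where f="(*)"] nn_integral_cong)
       (simp_all add: ennreal_power Hnn power_mult_distrib)
  also have "\<dots> \<le> ennreal A * (\<integral>\<^sup>+y. ennreal (H x y) * ennreal ((cmod (f y))\<^sup>2) \<partial>M)"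
    using HA1[OF x] by (intro mult_right_mono) auto
  finally show "(Tn f x)\<^sup>2 \<le> ennreal A * (\<integral>\<^sup>+y. ennreal (H x y) * ennreal ((cmod (f y))\<^sup>2) \<partial>M)" .
qed

lemma Sf_meas[measurable]:
  assumes f: "f \<in> L2 M" shows "intop M k f \<in> borel_measurable M"
proof -
  note fm[measurable] = L2D(1)[OF f]
  show ?thesis unfolding intop_def by measurable
qed

lemma Tn_meas[measurable]:
  assumes f: "f \<in> L2 M" shows "Tn f \<in> borel_measurable M"
proof -
  note fm[measurable] = L2D(1)[OF f]
  show ?thesis unfolding Tn_def[abs_def] by measurable
qed

lemma Tn_L2:
  assumes f: "f \<in> L2 M"
  shows "(\<integral>\<^sup>+x. (Tn f x)\<^sup>2 \<partial>M) \<le> ennreal (A * A * (\<integral>y. (cmod (f y))\<^sup>2 \<partial>M))"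
proof -
  note fm[measurable] = L2D(1)[OF f]
  have "(\<integral>\<^sup>+x. (Tn f x)\<^sup>2 \<partial>M) \<le> (\<integral>\<^sup>+x. ennreal A * (\<integral>\<^sup>+y. ennreal (H x y) * ennreal ((cmod (f y))\<^sup>2) \<partial>M) \<partial>M)"
    using pointwise(4)[OF f] by (intro nn_integral_mono) auto
  also have "\<dots> = ennreal A * (\<integral>\<^sup>+x. (\<integral>\<^sup>+y. ennreal (H x y) * ennreal ((cmod (f y))\<^sup>2) \<partial>M) \<partial>M)"
    by (intro nn_integral_cmult) measurable
  also have "(\<integral>\<^sup>+x. (\<integral>\<^sup>+y. ennreal (H x y) * ennreal ((cmod (f y))\<^sup>2) \<partial>M) \<partial>M)
      = (\<integral>\<^sup>+y. (\<integral>\<^sup>+x. ennreal (H x y) * ennreal ((cmod (f y))\<^sup>2) \<partial>M) \<partial>M)"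
    by (rule P.Fubini'[symmetric]) measurable
  also have "\<dots> = (\<integral>\<^sup>+y. (\<integral>\<^sup>+x. ennreal (H x y) \<partial>M) * ennreal ((cmod (f y))\<^sup>2) \<partial>M)"
    by (intro nn_integral_cong nn_integral_multc) measurable
  also have "\<dots> \<le> (\<integral>\<^sup>+y. ennreal A * ennreal ((cmod (f y))\<^sup>2) \<partial>M)"
    using HA2 by (intro nn_integral_mono mult_right_mono) auto
  also have "\<dots> = ennreal A * ennreal (\<integral>y. (cmod (f y))\<^sup>2 \<partial>M)"
    by (subst nn_integral_cmult) (auto simp: L2D(3)[OF f])
  finally show ?thesis using A0 L2D(4)[OF f]
    by (simp add: ennreal_mult' mult.assoc mult_left_mono)
qed

lemma bounded_Linf: "bounded_L2_Linf_intop M k"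
  unfolding bounded_L2_Linf_intop_def
proof (intro exI[of _ "sqrt B"] ballI conjI)
  fix f assume f: "f \<in> L2 M"
  show "AE x in M. integrable M (\<lambda>y. k x y * f y)"
    using pointwise(1)[OF f] by (intro AE_I2) auto
  show "intop M k f \<in> borel_measurable M" using f by measurable
  show "AE x in M. cmod (intop M k f x) \<le> sqrt B * L2norm M f"
  proof (intro AE_I2)
    fix x assume x: "x \<in> space M"
    define N where "N = (\<integral>y. (cmod (f y))\<^sup>2 \<partial>M)"
    have N0: "N \<ge> 0" using L2D(4)[OF f] by (simp add: N_def)
    have "(ennreal (cmod (intop M k f x)))\<^sup>2 \<le> (Tn f x)\<^sup>2"
      using pointwise(2)[OF f x] by (intro power_mono) auto
    also have "\<dots> \<le> ennreal (B * N)"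
      using pointwise(3)[OF f x] B0 N0 by (simp add: N_def ennreal_mult)
    finally have "ennreal ((cmod (intop M k f x))\<^sup>2) \<le> ennreal (B * N)"
      by (simp add: ennreal_power)
    then have "(cmod (intop M k f x))\<^sup>2 \<le> B * N"
      using B0 N0 by (simp add: ennreal_le_iff)
    then have "sqrt ((cmod (intop M k f x))\<^sup>2) \<le> sqrt (B * N)"
      by (rule real_sqrt_le_mono)
    then show "cmod (intop M k f x) \<le> sqrt B * L2norm M f"
      by (simp add: L2D(5)[OF f] N_def real_sqrt_mult)
  qed
qed

lemma bounded_L2: "bounded_L2_intop M k"
  unfolding bounded_L2_intop_def
proof (intro exI[of _ "A"] ballI conjI)
  fix f assume f: "f \<in> L2 M"
  note fm[measurable] = L2D(1)[OF f]
  define N where "N = (\<integral>y. (cmod (f y))\<^sup>2 \<partial>M)"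
  have N0: "N \<ge> 0" using L2D(4)[OF f] by (simp add: N_def)
  show "AE x in M. integrable M (\<lambda>y. k x y * f y)"
    using pointwise(1)[OF f] by (intro AE_I2) auto
  have nn: "(\<integral>\<^sup>+x. ennreal ((cmod (intop M k f x))\<^sup>2) \<partial>M) \<le> ennreal (A * A * N)"
  proof -
    have "(\<integral>\<^sup>+x. ennreal ((cmod (intop M k f x))\<^sup>2) \<partial>M) \<le> (\<integral>\<^sup>+x. (Tn f x)\<^sup>2 \<partial>M)"
    proof (intro nn_integral_mono)
      fix x assume x: "x \<in> space M"
      have "ennreal ((cmod (intop M k f x))\<^sup>2) = (ennreal (cmod (intop M k f x)))\<^sup>2"
        by (simp add: ennreal_power)
      also have "\<dots> \<le> (Tn f x)\<^sup>2" using pointwise(2)[OF f x] by (intro power_mono) auto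
      finally show "ennreal ((cmod (intop M k f x))\<^sup>2) \<le> (Tn f x)\<^sup>2" .
    qed
    also have "\<dots> \<le> ennreal (A * A * N)" using Tn_L2[OF f] by (simp add: N_def)
    finally show ?thesis .
  qed
  show int: "intop M k f \<in> L2 M"
    unfolding L2_def using f nn
    by (auto simp: integrable_iff_bounded intro: le_less_trans)
  have "ennreal (\<integral>x. (cmod (intop M k f x))\<^sup>2 \<partial>M) = (\<integral>\<^sup>+x. ennreal ((cmod (intop M k f x))\<^sup>2) \<partial>M)"
    using L2D(3)[OF int] by simp
  also note nn
  finally have "(\<integral>x. (cmod (intop M k f x))\<^sup>2 \<partial>M) \<le> A * A * N"
    using A0 N0 by (simp add: ennreal_le_iff)
  then have "sqrt (\<integral>x. (cmod (intop M k f x))\<^sup>2 \<partial>M) \<le> sqrt (A * A * N)"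
    by (rule real_sqrt_le_mono)
  then show "L2norm M (intop M k f) \<le> A * L2norm M f"
    using A0 by (simp add: L2norm_def N_def real_sqrt_mult)
qed

lemma selfadj: "selfadjoint_L2_intop M k"
  unfolding selfadjoint_L2_intop_def
proof (intro ballI)
  fix f g assume f: "f \<in> L2 M" and g: "g \<in> L2 M"
  note fm[measurable] = L2D(1)[OF f]
  note gm[measurable] = L2D(1)[OF g]
  define Nf where "Nf = (\<integral>y. (cmod (f y))\<^sup>2 \<partial>M)"
  define Ng where "Ng = (\<integral>y. (cmod (g y))\<^sup>2 \<partial>M)"
  have Phi_meas[measurable]: "(\<lambda>(x,y). k x y * f y * cnj (g x)) \<in> borel_measurable (M \<Otimes>\<^sub>M M)"
    by measurable
  have "(\<integral>\<^sup>+p. ennreal (norm ((\<lambda>(x,y). k x y * f y * cnj (g x)) p)) \<partial>(M \<Otimes>\<^sub>M M))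
      = (\<integral>\<^sup>+x. (\<integral>\<^sup>+y. ennreal (norm (k x y * f y * cnj (g x))) \<partial>M) \<partial>M)"
    by (subst nn_integral_fst[symmetric]) (simp_all add: case_prod_beta)
  also have "\<dots> \<le> (\<integral>\<^sup>+x. ennreal (cmod (g x)) * Tn f x \<partial>M)"
  proof (intro nn_integral_mono)
    fix x assume x: "x \<in> space M"
    have "(\<integral>\<^sup>+y. ennreal (norm (k x y * f y * cnj (g x))) \<partial>M)
        \<le> (\<integral>\<^sup>+y. ennreal (cmod (g x)) * (ennreal (H x y) * ennreal (cmod (f y))) \<partial>M)"
      by (intro nn_integral_mono_AE, use kH[OF x] in eventually_elim)
         (auto simp: norm_mult ennreal_mult'[symmetric] Hnn intro!: ennreal_leI aux_mono3)
    also have "\<dots> = ennreal (cmod (g x)) * Tn f x"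
      unfolding Tn_def using x by (intro nn_integral_cmult) measurable
    finally show "(\<integral>\<^sup>+y. ennreal (norm (k x y * f y * cnj (g x))) \<partial>M) \<le> ennreal (cmod (g x)) * Tn f x" .
  qed
  also have "\<dots> < \<infinity>"
  proof -
    have "(\<integral>\<^sup>+x. ennreal (cmod (g x)) * Tn f x \<partial>M)\<^sup>2
        \<le> (\<integral>\<^sup>+x. ennreal (cmod (g x)) ^ 2 \<partial>M) * (\<integral>\<^sup>+x. (Tn f x) ^ 2 \<partial>M)"
      using f by (intro Cauchy_Schwarz_nn_integral) measurable
    also have "\<dots> \<le> ennreal Ng * ennreal (A * A * Nf)"
      using Tn_L2[OF f] L2D(3)[OF g]
      by (intro mult_mono) (simp_all add: ennreal_power Ng_def Nf_def)
    also have "\<dots> < \<infinity>" by (simp add: ennreal_mult_less_top flip: ennreal_mult)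
    finally show ?thesis by (simp add: power_less_top_ennreal)
  qed
  finally have int: "integrable (M \<Otimes>\<^sub>M M) (\<lambda>(x,y). k x y * f y * cnj (g x))"
    unfolding integrable_iff_bounded by (simp add: case_prod_beta)
  have "(\<integral>x. intop M k f x * cnj (g x) \<partial>M) = (\<integral>x. (\<integral>y. k x y * f y * cnj (g x) \<partial>M) \<partial>M)"
    unfolding intop_def by simp
  also have "\<dots> = integral\<^sup>L (M \<Otimes>\<^sub>M M) (\<lambda>(x,y). k x y * f y * cnj (g x))"
    by (rule P.integral_fst[OF int])
  also have "\<dots> = (\<integral>y. (\<integral>x. k x y * f y * cnj (g x) \<partial>M) \<partial>M)"
    by (rule P.integral_snd[OF int, symmetric])
  also have "\<dots> = (\<integral>y. f y * cnj (intop M k g y) \<partial>M)"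
  proof (intro Bochner_Integration.integral_cong refl)
    fix y assume y: "y \<in> space M"
    have "f y * cnj (intop M k g y) = f y * (\<integral>x. cnj (k y x * g x) \<partial>M)"
      unfolding intop_def by (simp only: Bochner_Integration.integral_cnj)
    also have "\<dots> = (\<integral>x. f y * cnj (k y x * g x) \<partial>M)" by (rule integral_mult_right_zero[symmetric])
    also have "\<dots> = (\<integral>x. k x y * f y * cnj (g x) \<partial>M)"
      by (intro Bochner_Integration.integral_cong refl) (simp add: ksym[OF _ y])
    finally show "(\<integral>x. k x y * f y * cnj (g x) \<partial>M) = f y * cnj (intop M k g y)" by simp
  qed
  finally show "(\<integral>x. intop M k f x * cnj (g x) \<partial>M) = (\<integral>x. f x * cnj (intop M k g x) \<partial>M)" .
qed

lemma all3: "bounded_L2_intop M k \<and> selfadjoint_L2_intop M k \<and> bounded_L2_Linf_intop M k"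
  using bounded_L2 selfadj bounded_Linf by blast

end



lemma half_exp_fin:
  fixes c :: real assumes c: "c > 0"
  shows "(\<integral>\<^sup>+t. ennreal (exp (- c * t)) * indicator {0..} t \<partial>lborel) < \<infinity>"
proof -
  have "((\<lambda>x. exp (- c * x)) has_integral exp (- c * 0) / c) {0..}"
    using has_integral_exp_minus_to_infinity[OF c] .
  from nn_integral_has_integral_lebesgue'[OF _ this]
  show ?thesis by simp
qed

lemma half_gamma_fin:
  fixes c q :: real assumes c: "c > 0" and q: "q < 1"
  shows "(\<integral>\<^sup>+t. ennreal (t powr (- q) * exp (- c * t)) * indicator {0..} t \<partial>lborel) < \<infinity>"
proof -
  define F where "F t = ennreal (t powr (- q) / exp t) * indicator {0..} t" for t :: real
  have Fm[measurable]: "F \<in> borel_measurable borel" unfolding F_def by measurable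
  have "((\<lambda>t. t powr ((1 - q) - 1) / exp t) has_integral Gamma (1 - q)) {0..}"
    using q by (intro Gamma_integral_real) simp
  then have "((\<lambda>t. t powr (- q) / exp t) has_integral Gamma (1 - q)) {0..}" by simp
  from nn_integral_has_integral_lebesgue'[OF _ this]
  have "integral\<^sup>N lborel F = ennreal (Gamma (1 - q))" unfolding F_def by simp
  moreover have "integral\<^sup>N lborel F = \<bar>c\<bar> * (\<integral>\<^sup>+x. F (0 + c * x) \<partial>lborel)"
    using c by (intro nn_integral_real_affine) auto
  ultimately have "ennreal c * (\<integral>\<^sup>+x. F (c * x) \<partial>lborel) < \<infinity>" using c by simp
  then have fin: "(\<integral>\<^sup>+x. F (c * x) \<partial>lborel) < \<infinity>"
    using c by (auto simp: ennreal_mult_less_top)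
  have "(\<integral>\<^sup>+t. ennreal (t powr (- q) * exp (- c * t)) * indicator {0..} t \<partial>lborel)
      = (\<integral>\<^sup>+t. ennreal (c powr q) * F (c * t) \<partial>lborel)"
  proof (intro nn_integral_cong)
    fix t :: real
    show "ennreal (t powr (- q) * exp (- c * t)) * indicator {0..} t = ennreal (c powr q) * F (c * t)"
    proof (cases "t \<ge> 0")
      case True
      have "(c * t) powr (- q) = c powr (- q) * t powr (- q)" using c True by (simp add: powr_mult)
      then have "c powr q * ((c * t) powr (- q) / exp (c * t)) = t powr (- q) * exp (- c * t)"
        using c by (simp add: powr_minus field_simps exp_minus)
      then show ?thesis using True c
        by (simp add: F_def ennreal_mult'[symmetric] zero_le_mult_iff)
    next
      case False
      then show ?thesis using c by (simp add: F_def zero_le_mult_iff)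
    qed
  qed
  also have "\<dots> = ennreal (c powr q) * (\<integral>\<^sup>+x. F (c * x) \<partial>lborel)"
    by (intro nn_integral_cmult) measurable
  also have "\<dots> < \<infinity>" using fin by (simp add: ennreal_mult_less_top)
  finally show ?thesis .
qed

definition u_fun :: "real \<Rightarrow> real \<Rightarrow> real \<Rightarrow> real" where
  "u_fun q c s = (\<bar>s\<bar> powr (- q) + 1) * exp (- c * \<bar>s\<bar>)"

lemma u_fun_nonneg: "u_fun q c s \<ge> 0"
  unfolding u_fun_def by (intro mult_nonneg_nonneg add_nonneg_nonneg) auto

lemma u_fun_meas[measurable]: "u_fun q c \<in> borel_measurable borel"
  unfolding u_fun_def[abs_def] by measurable

lemma u_fun_fin:
  fixes c q :: real assumes c: "c > 0" and q: "q < 1"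
  shows "(\<integral>\<^sup>+s. ennreal (u_fun q c s) \<partial>lborel) < \<infinity>"
proof -
  define g where "g t = (t powr (- q) + 1) * exp (- c * t)" for t
  define J where "J = (\<integral>\<^sup>+t. ennreal (g t) * indicator {0..} t \<partial>lborel)"
  have gm[measurable]: "g \<in> borel_measurable borel" unfolding g_def by measurable
  have "J = (\<integral>\<^sup>+t. ennreal (t powr (- q) * exp (- c * t)) * indicator {0..} t
              + ennreal (exp (- c * t)) * indicator {0..} t \<partial>lborel)"
    unfolding J_def
  proof (intro nn_integral_cong)
    fix t :: real
    have "ennreal (g t) = ennreal (t powr (- q) * exp (- c * t)) + ennreal (exp (- c * t))"
      unfolding g_def distrib_right by (subst ennreal_plus) auto
    then show "ennreal (g t) * indicator {0..} t = ennreal (t powr (- q) * exp (- c * t)) * indicator {0..} t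
              + ennreal (exp (- c * t)) * indicator {0..} t"
      by (simp add: distrib_right)
  qed
  also have "\<dots> = (\<integral>\<^sup>+t. ennreal (t powr (- q) * exp (- c * t)) * indicator {0..} t \<partial>lborel)
       + (\<integral>\<^sup>+t. ennreal (exp (- c * t)) * indicator {0..} t \<partial>lborel)"
    by (intro nn_integral_add) measurable
  also have "\<dots> < \<infinity>" using half_gamma_fin[OF c q] half_exp_fin[OF c] by simp
  finally have Jfin: "J < \<infinity>" .
  have refl: "(\<integral>\<^sup>+t. ennreal (g (- t)) * indicator {0..} (- t) \<partial>lborel) = J"
  proof -
    have "(\<integral>\<^sup>+t. ennreal (g t) * indicator {0..} t \<partial>lborel) = (\<integral>\<^sup>+x. ennreal (g (0 + (-1) * x)) * indicator {0..} (0 + (-1) * x) \<partial>lborel)"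
      using nn_integral_real_affine[of "\<lambda>t. ennreal (g t) * indicator {0..} t" "-1" 0] by simp
    then show ?thesis unfolding J_def by simp
  qed
  have "(\<integral>\<^sup>+s. ennreal (u_fun q c s) \<partial>lborel)
      \<le> (\<integral>\<^sup>+t. ennreal (g t) * indicator {0..} t + ennreal (g (- t)) * indicator {0..} (- t) \<partial>lborel)"
  proof (intro nn_integral_mono)
    fix s :: real
    show "ennreal (u_fun q c s) \<le> ennreal (g s) * indicator {0..} s + ennreal (g (- s)) * indicator {0..} (- s)"
    proof (cases "s \<ge> 0")
      case True
      then have "u_fun q c s = g s" by (simp add: u_fun_def g_def)
      then show ?thesis using True by (simp add: indicator_def)
    next
      case False
      then have "u_fun q c s = g (- s)" by (simp add: u_fun_def g_def)
      then show ?thesis using False by (simp add: indicator_def)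
    qed
  qed
  also have "\<dots> = J + J"
    using refl unfolding J_def by (subst nn_integral_add) auto
  also have "\<dots> < \<infinity>" using Jfin by simp
  finally show ?thesis .
qed




lemma K0_meas[measurable]: "K0 \<in> borel_measurable borel"
  unfolding K0_def[abs_def] set_lebesgue_integral_def by measurable

lemma halfplane_open: "open halfplane"
  unfolding halfplane_def by (intro open_Collect_less continuous_intros)

lemma halfplane_sets_borel: "halfplane \<in> sets borel"
  by (rule borel_open[OF halfplane_open])

lemma halfplane_sets[measurable]: "halfplane \<in> sets lborel"
  unfolding sets_lborel by (rule borel_open[OF halfplane_open])

lemma space_mE[simp]: "space mE = halfplane"
  unfolding mE_def by (simp add: space_restrict_space)

lemma sf_mE: "sigma_finite_measure mE"
  unfolding mE_def by (intro sigma_finite_measure_restrict_space halfplane_sets lborel.sigma_finite_measure_axioms)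

lemma mE_borel[measurable]: "(\<lambda>x. x) \<in> measurable mE borel"
  unfolding mE_def by (rule measurable_restrict_space1) simp

lemma mE_pair_id: "(\<lambda>p. p) \<in> measurable (mE \<Otimes>\<^sub>M mE) borel"
proof -
  have "(\<lambda>p. (fst p, snd p)) \<in> measurable (mE \<Otimes>\<^sub>M mE) (borel \<Otimes>\<^sub>M borel)"
    by (intro measurable_Pair measurable_compose[OF measurable_fst mE_borel] measurable_compose[OF measurable_snd mE_borel])
  then show ?thesis by (simp add: borel_prod)
qed

lemma mE_pair_meas:
  assumes "g \<in> borel_measurable borel"
  shows "g \<in> borel_measurable (mE \<Otimes>\<^sub>M mE)"
  using measurable_compose[OF mE_pair_id assms] by simp

lemma kernel_meas: "(\<lambda>(x,y). Sb_kernel b lam x y) \<in> borel_measurable borel"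
proof -
  have m1: "(\<lambda>p::(real\<times>real)\<times>(real\<times>real). sqrt lam * dist (fst p) (snd p)) \<in> borel_measurable borel"
    by (intro borel_measurable_continuous_onI continuous_intros)
  have m2: "(\<lambda>p::(real\<times>real)\<times>(real\<times>real). sqrt lam * dist (fst p) (refl_star (snd p))) \<in> borel_measurable borel"
    unfolding refl_star_def by (intro borel_measurable_continuous_onI continuous_intros)
  have m3: "(\<lambda>p::(real\<times>real)\<times>(real\<times>real). exp (\<i> * complex_of_real (b * phi (fst p) (snd p)))) \<in> borel_measurable borel"
    unfolding phi_def by (intro borel_measurable_continuous_onI continuous_intros)
  note [measurable] = measurable_compose[OF m1 K0_meas] measurable_compose[OF m2 K0_meas] m3
  show ?thesis unfolding Sb_kernel_def case_prod_beta by measurable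
qed

lemma powr_pair_bound:
  fixes z :: "real \<times> real" and q a :: real
  assumes q: "q \<ge> 0" and a: "a > 0"
  shows "norm z powr (- q) * exp (- a * norm z) \<le> u_fun q (a/2) (fst z) * u_fun q (a/2) (snd z)"
proof (cases "norm z = 0")
  case True
  then show ?thesis using u_fun_nonneg by (simp add: mult_nonneg_nonneg)
next
  case False
  define n where "n = norm z"
  have n0: "n > 0" using False by (simp add: n_def)
  have n1: "\<bar>fst z\<bar> \<le> n" and n2: "\<bar>snd z\<bar> \<le> n"
    unfolding n_def by (cases z; simp add: norm_Pair real_le_rsqrt)+
  have p: "n powr (- q) \<le> \<bar>fst z\<bar> powr (- q) + \<bar>snd z\<bar> powr (- q)"
  proof (cases "fst z = 0")
    case False
    then have "n powr (- q) \<le> \<bar>fst z\<bar> powr (- q)" using n1 q by (intro powr_mono2') auto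
    then show ?thesis by (simp add: add_increasing2)
  next
    case True
    then have "snd z \<noteq> 0" using n0 unfolding n_def by (cases z) auto
    then have "n powr (- q) \<le> \<bar>snd z\<bar> powr (- q)" using n2 q by (intro powr_mono2') auto
    then show ?thesis by (simp add: add_increasing)
  qed
  also have "\<dots> \<le> (\<bar>fst z\<bar> powr (- q) + 1) * (\<bar>snd z\<bar> powr (- q) + 1)"
    by (simp add: algebra_simps add_increasing)
  finally have p': "n powr (- q) \<le> (\<bar>fst z\<bar> powr (- q) + 1) * (\<bar>snd z\<bar> powr (- q) + 1)" .
  have e: "exp (- a * n) \<le> exp (- (a/2) * \<bar>fst z\<bar>) * exp (- (a/2) * \<bar>snd z\<bar>)"
  proof -
    have "a * (\<bar>fst z\<bar> + \<bar>snd z\<bar>) \<le> a * (2 * n)" using n1 n2 a by (intro mult_left_mono) auto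
    then show ?thesis by (simp add: flip: exp_add) (simp add: algebra_simps)
  qed
  have "n powr (- q) * exp (- a * n)
     \<le> ((\<bar>fst z\<bar> powr (- q) + 1) * (\<bar>snd z\<bar> powr (- q) + 1)) * (exp (- (a/2) * \<bar>fst z\<bar>) * exp (- (a/2) * \<bar>snd z\<bar>))"
    using p' e by (intro mult_mono) auto
  also have "\<dots> = u_fun q (a/2) (fst z) * u_fun q (a/2) (snd z)"
    by (simp add: u_fun_def)
  finally show ?thesis by (simp add: n_def)
qed

lemma prod_translate:
  fixes u :: "real \<Rightarrow> real" and x :: "real \<times> real"
  assumes um[measurable]: "u \<in> borel_measurable borel" and unn: "\<And>s. 0 \<le> u s"
  shows "(\<integral>\<^sup>+y. ennreal (u (fst x - fst y) * u (snd x - snd y)) \<partial>lborel)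
       = (\<integral>\<^sup>+s. ennreal (u s) \<partial>lborel) * (\<integral>\<^sup>+s. ennreal (u s) \<partial>lborel)"
proof -
  define I where "I = (\<integral>\<^sup>+s. ennreal (u s) \<partial>lborel)"
  have tr: "(\<integral>\<^sup>+y. ennreal (u (t - y)) \<partial>lborel) = I" for t
    using nn_integral_real_affine[of "\<lambda>s. ennreal (u s)" "-1" t] by (simp add: I_def)
  have "(\<integral>\<^sup>+y. ennreal (u (fst x - fst y) * u (snd x - snd y)) \<partial>lborel)
      = (\<integral>\<^sup>+y. ennreal (u (fst x - fst y) * u (snd x - snd y)) \<partial>(lborel \<Otimes>\<^sub>M lborel))"
    by (simp add: lborel_prod)
  also have "\<dots> = (\<integral>\<^sup>+y1. (\<integral>\<^sup>+y2. ennreal (u (fst x - y1) * u (snd x - y2)) \<partial>lborel) \<partial>lborel)"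
    by (subst sigma_finite_measure.nn_integral_fst[OF lborel.sigma_finite_measure_axioms, symmetric]) simp_all
  also have "\<dots> = (\<integral>\<^sup>+y1. ennreal (u (fst x - y1)) * I \<partial>lborel)"
  proof (intro nn_integral_cong)
    fix y1 :: real
    have "(\<integral>\<^sup>+y2. ennreal (u (fst x - y1) * u (snd x - y2)) \<partial>lborel)
        = (\<integral>\<^sup>+y2. ennreal (u (fst x - y1)) * ennreal (u (snd x - y2)) \<partial>lborel)"
      using unn by (simp add: ennreal_mult)
    also have "\<dots> = ennreal (u (fst x - y1)) * (\<integral>\<^sup>+y2. ennreal (u (snd x - y2)) \<partial>lborel)"
      by (intro nn_integral_cmult) simp
    finally show "(\<integral>\<^sup>+y2. ennreal (u (fst x - y1) * u (snd x - y2)) \<partial>lborel) = ennreal (u (fst x - y1)) * I"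
      by (simp add: tr)
  qed
  also have "\<dots> = (\<integral>\<^sup>+y1. ennreal (u (fst x - y1)) \<partial>lborel) * I"
    by (intro nn_integral_multc) simp
  also have "\<dots> = I * I" by (simp add: tr)
  finally show ?thesis by (simp add: I_def)
qed

lemma pair_u_meas:
  fixes u :: "real \<Rightarrow> real"
  assumes um: "u \<in> borel_measurable borel"
  shows "(\<lambda>y::real\<times>real. u (fst x - fst y) * u (snd x - snd y)) \<in> borel_measurable borel"
proof -
  have a: "(\<lambda>y::real\<times>real. fst x - fst y) \<in> borel_measurable borel"
    by (intro borel_measurable_continuous_onI continuous_intros)
  have b: "(\<lambda>y::real\<times>real. snd x - snd y) \<in> borel_measurable borel"
    by (intro borel_measurable_continuous_onI continuous_intros)
  show ?thesis
    by (rule borel_measurable_times[OF measurable_compose[OF a um] measurable_compose[OF b um]])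
qed

definition KB :: "real \<Rightarrow> real" where
  "KB r = 4 * (exp (- r / 2) * (r/4) powr (-1/4))"

definition Hk :: "real \<Rightarrow> real \<times> real \<Rightarrow> real \<times> real \<Rightarrow> real" where
  "Hk lam x y = (1/pi) * KB (sqrt lam * dist x y)"

lemma KB_nonneg: "KB r \<ge> 0" unfolding KB_def by simp

lemma KB_meas[measurable]: "KB \<in> borel_measurable borel"
  unfolding KB_def[abs_def] by measurable

lemma Hk_nonneg: "Hk lam x y \<ge> 0" unfolding Hk_def using KB_nonneg by simp

lemma Hk_meas: "(\<lambda>(x,y). Hk lam x y) \<in> borel_measurable borel"
proof -
  have m1: "(\<lambda>p::(real\<times>real)\<times>(real\<times>real). sqrt lam * dist (fst p) (snd p)) \<in> borel_measurable borel"
    by (intro borel_measurable_continuous_onI continuous_intros)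
  note [measurable] = measurable_compose[OF m1 KB_meas]
  show ?thesis unfolding Hk_def case_prod_beta by measurable
qed

lemma KB_antimono: "0 < a \<Longrightarrow> a \<le> a' \<Longrightarrow> KB a' \<le> KB a"
  unfolding KB_def
  by (intro mult_left_mono mult_mono powr_mono2') auto

lemma Hk_form:
  assumes lam: "lam > 0"
  shows "Hk lam x y = ((4/pi) * (sqrt lam / 4) powr (-1/4)) * (dist x y powr (-1/4) * exp (- (sqrt lam / 2) * dist x y))"
proof -
  have "(sqrt lam * dist x y / 4) powr (-1/4) = (sqrt lam / 4) powr (-1/4) * dist x y powr (-1/4)"
    using lam powr_mult[of "sqrt lam / 4" "dist x y" "-1/4"] by (simp add: mult.commute mult.left_commute)
  then show ?thesis unfolding Hk_def KB_def by (simp add: field_simps)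
qed

lemma Hk_sq_form:
  assumes lam: "lam > 0"
  shows "(Hk lam x y)\<^sup>2 = ((4/pi) * (sqrt lam / 4) powr (-1/4))\<^sup>2 * (dist x y powr (-1/2) * exp (- (sqrt lam) * dist x y))"
proof -
  have "(dist x y powr (-1/4))\<^sup>2 = dist x y powr (-1/2)"
    by (simp add: power2_eq_square flip: powr_add)
  moreover have "(exp (- (sqrt lam / 2) * dist x y))\<^sup>2 = exp (- (sqrt lam) * dist x y)"
    by (simp add: power2_eq_square flip: exp_add)
  moreover have "\<And>c p e::real. (c * (p * e))\<^sup>2 = c\<^sup>2 * (p\<^sup>2 * e\<^sup>2)"
    by (simp add: power_mult_distrib)
  ultimately show ?thesis unfolding Hk_form[OF lam] by metis
qed

lemma nn_mE_le:
  assumes [measurable]: "F \<in> borel_measurable lborel"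
  shows "(\<integral>\<^sup>+y. F y \<partial>mE) \<le> (\<integral>\<^sup>+y. F y \<partial>lborel)"
  unfolding mE_def
  by (subst nn_integral_restrict_space) (auto simp: halfplane_sets_borel intro!: nn_integral_mono split: split_indicator)

lemma Hk_int1:
  assumes lam: "lam > 0"
  defines "c1 \<equiv> (4/pi) * (sqrt lam / 4) powr (-1/4)"
  defines "I1 \<equiv> (\<integral>\<^sup>+s. ennreal (u_fun (1/4) (sqrt lam / 4) s) \<partial>lborel)"
  shows "(\<integral>\<^sup>+y. ennreal (Hk lam x y) \<partial>mE) \<le> ennreal c1 * I1 * I1"
proof -
  have c1: "c1 \<ge> 0" unfolding c1_def by simp
  have m: "(\<lambda>y. Hk lam x y) \<in> borel_measurable lborel"
  proof -
    have m1: "(\<lambda>y::real\<times>real. sqrt lam * dist x y) \<in> borel_measurable borel"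
      by (intro borel_measurable_continuous_onI continuous_intros)
    have "(\<lambda>y. Hk lam x y) \<in> borel_measurable borel"
      unfolding Hk_def using measurable_compose[OF m1 KB_meas] by measurable
    then show ?thesis by simp
  qed
  have "(\<integral>\<^sup>+y. ennreal (Hk lam x y) \<partial>mE) \<le> (\<integral>\<^sup>+y. ennreal (Hk lam x y) \<partial>lborel)"
    using m by (intro nn_mE_le) simp
  also have "\<dots> \<le> (\<integral>\<^sup>+y. ennreal c1 * ennreal (u_fun (1/4) (sqrt lam / 4) (fst x - fst y) * u_fun (1/4) (sqrt lam / 4) (snd x - snd y)) \<partial>lborel)"
  proof (intro nn_integral_mono)
    fix y :: "real \<times> real"
    have "dist x y powr (-1/4) * exp (- (sqrt lam / 2) * dist x y)
        \<le> u_fun (1/4) (sqrt lam / 2 / 2) (fst (x - y)) * u_fun (1/4) (sqrt lam / 2 / 2) (snd (x - y))"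
      using powr_pair_bound[of "1/4" "sqrt lam / 2" "x - y"] lam by (simp add: dist_norm)
    then have "Hk lam x y \<le> c1 * (u_fun (1/4) (sqrt lam / 4) (fst x - fst y) * u_fun (1/4) (sqrt lam / 4) (snd x - snd y))"
      unfolding Hk_form[OF lam] c1_def[symmetric] using c1 by (intro mult_left_mono) auto
    then show "ennreal (Hk lam x y) \<le> ennreal c1 * ennreal (u_fun (1/4) (sqrt lam / 4) (fst x - fst y) * u_fun (1/4) (sqrt lam / 4) (snd x - snd y))"
      using c1 by (simp add: ennreal_mult[symmetric] u_fun_nonneg)
  qed
  also have "\<dots> = ennreal c1 * (\<integral>\<^sup>+y. ennreal (u_fun (1/4) (sqrt lam / 4) (fst x - fst y) * u_fun (1/4) (sqrt lam / 4) (snd x - snd y)) \<partial>lborel)"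
    using pair_u_meas[OF u_fun_meas[of "1/4" "sqrt lam / 4"], where x=x] by (intro nn_integral_cmult) simp
  also have "\<dots> = ennreal c1 * I1 * I1"
    unfolding I1_def by (subst prod_translate) (auto simp: u_fun_nonneg mult.assoc)
  finally show ?thesis .
qed

lemma Hk_x_meas:
  "(\<lambda>y. Hk lam x y) \<in> borel_measurable lborel"
proof -
  have m1: "(\<lambda>y::real\<times>real. sqrt lam * dist x y) \<in> borel_measurable borel"
    by (intro borel_measurable_continuous_onI continuous_intros)
  have "(\<lambda>y. Hk lam x y) \<in> borel_measurable borel"
    unfolding Hk_def using measurable_compose[OF m1 KB_meas] by measurable
  then show ?thesis by simp
qed

lemma Hk_int2:
  assumes lam: "lam > 0"
  defines "c1 \<equiv> (4/pi) * (sqrt lam / 4) powr (-1/4)"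
  defines "I2 \<equiv> (\<integral>\<^sup>+s. ennreal (u_fun (1/2) (sqrt lam / 2) s) \<partial>lborel)"
  shows "(\<integral>\<^sup>+y. ennreal ((Hk lam x y)\<^sup>2) \<partial>mE) \<le> ennreal (c1\<^sup>2) * I2 * I2"
proof -
  have c1: "c1\<^sup>2 \<ge> 0" by simp
  have m: "(\<lambda>y. (Hk lam x y)\<^sup>2) \<in> borel_measurable lborel"
    using Hk_x_meas[of lam x] by measurable
  have "(\<integral>\<^sup>+y. ennreal ((Hk lam x y)\<^sup>2) \<partial>mE) \<le> (\<integral>\<^sup>+y. ennreal ((Hk lam x y)\<^sup>2) \<partial>lborel)"
    using m by (intro nn_mE_le) simp
  also have "\<dots> \<le> (\<integral>\<^sup>+y. ennreal (c1\<^sup>2) * ennreal (u_fun (1/2) (sqrt lam / 2) (fst x - fst y) * u_fun (1/2) (sqrt lam / 2) (snd x - snd y)) \<partial>lborel)"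
  proof (intro nn_integral_mono)
    fix y :: "real \<times> real"
    have "dist x y powr (-1/2) * exp (- (sqrt lam) * dist x y)
        \<le> u_fun (1/2) (sqrt lam / 2) (fst (x - y)) * u_fun (1/2) (sqrt lam / 2) (snd (x - y))"
      using powr_pair_bound[of "1/2" "sqrt lam" "x - y"] lam by (simp add: dist_norm)
    then have "(Hk lam x y)\<^sup>2 \<le> c1\<^sup>2 * (u_fun (1/2) (sqrt lam / 2) (fst x - fst y) * u_fun (1/2) (sqrt lam / 2) (snd x - snd y))"
      unfolding Hk_sq_form[OF lam] c1_def[symmetric] using c1 by (intro mult_left_mono) auto
    then show "ennreal ((Hk lam x y)\<^sup>2) \<le> ennreal (c1\<^sup>2) * ennreal (u_fun (1/2) (sqrt lam / 2) (fst x - fst y) * u_fun (1/2) (sqrt lam / 2) (snd x - snd y))"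
      using c1 by (simp add: ennreal_mult[symmetric] u_fun_nonneg)
  qed
  also have "\<dots> = ennreal (c1\<^sup>2) * (\<integral>\<^sup>+y. ennreal (u_fun (1/2) (sqrt lam / 2) (fst x - fst y) * u_fun (1/2) (sqrt lam / 2) (snd x - snd y)) \<partial>lborel)"
    using pair_u_meas[OF u_fun_meas[of "1/2" "sqrt lam / 2"], where x=x] by (intro nn_integral_cmult) simp
  also have "\<dots> = ennreal (c1\<^sup>2) * I2 * I2"
    unfolding I2_def by (subst prod_translate) (auto simp: u_fun_nonneg mult.assoc)
  finally show ?thesis .
qed

lemma Hk_sym: "Hk lam x y = Hk lam y x"
  unfolding Hk_def by (simp add: dist_commute)

lemma dist_refl_le:
  assumes "x \<in> halfplane" "y \<in> halfplane"
  shows "dist x y \<le> dist x (refl_star y)"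
proof -
  obtain x1 x2 y1 y2 where xy: "x = (x1, x2)" "y = (y1, y2)" by (cases x, cases y) auto
  have "x2 > 0" "y2 > 0" using assms xy by (auto simp: halfplane_def)
  then have "(dist x2 y2)\<^sup>2 \<le> (dist x2 (- y2))\<^sup>2"
    by (simp add: dist_real_def power2_eq_square algebra_simps)
  then show ?thesis unfolding xy refl_star_def by (simp add: dist_Pair_Pair)
qed

lemma kernel_bound:
  assumes lam: "lam > 0" and x: "x \<in> halfplane" and y: "y \<in> halfplane" and xy: "x \<noteq> y"
  shows "cmod (Sb_kernel b lam x y) \<le> Hk lam x y"
proof -
  define a where "a = sqrt lam * dist x y"
  define a' where "a' = sqrt lam * dist x (refl_star y)"
  have a0: "a > 0" using lam xy by (simp add: a_def)
  have aa: "a \<le> a'" unfolding a_def a'_def using dist_refl_le[OF x y] lam by (intro mult_left_mono) auto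
  have a'0: "a' > 0" using a0 aa by linarith
  have "cmod (Sb_kernel b lam x y) = \<bar>1 / (2 * pi) * (K0 a - K0 a')\<bar>"
    unfolding Sb_kernel_def a_def a'_def norm_mult by (simp only: norm_exp_i_times norm_of_real)
  also have "\<dots> = 1 / (2 * pi) * \<bar>K0 a - K0 a'\<bar>" by (simp add: abs_mult)
  also have "\<dots> \<le> 1 / (2 * pi) * (KB a + KB a)"
  proof (intro mult_left_mono)
    have "K0 a' \<le> KB a'" using K0_bound(3)[OF a'0] by (simp add: KB_def)
    also have "\<dots> \<le> KB a" by (rule KB_antimono[OF a0 aa])
    finally have 1: "K0 a' \<le> KB a" .
    have 2: "K0 a \<le> KB a" using K0_bound(3)[OF a0] by (simp add: KB_def)
    show "\<bar>K0 a - K0 a'\<bar> \<le> KB a + KB a" using 1 2 K0_bound(2)[OF a0] K0_bound(2)[OF a'0] by linarith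
  qed simp
  also have "\<dots> = Hk lam x y" unfolding Hk_def a_def by simp
  finally show ?thesis .
qed

lemma kernel_sym: "Sb_kernel b lam y x = cnj (Sb_kernel b lam x y)"
proof -
  have p: "phi y x = - phi x y" unfolding phi_def by (simp add: field_simps)
  have d: "dist y (refl_star x) = dist x (refl_star y)"
    unfolding refl_star_def by (cases x, cases y) (simp add: dist_Pair_Pair dist_real_def abs_minus_commute add.commute)
  have e: "cnj (exp (\<i> * complex_of_real t)) = exp (\<i> * complex_of_real (- t))" for t
    by (simp add: exp_cnj)
  have e2: "exp (\<i> * complex_of_real (b * phi y x)) = cnj (exp (\<i> * complex_of_real (b * phi x y)))"
    using e[of "b * phi x y"] p by simp
  show ?thesis
    by (simp only: Sb_kernel_def e2 d dist_commute[of y x] complex_cnj_mult complex_cnj_complex_of_real)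
qed




theorem lemmaB2:
  fixes b lam :: real
  assumes "lam > 0"
  shows "bounded_L2_intop mE (Sb_kernel b lam) \<and>
         selfadjoint_L2_intop mE (Sb_kernel b lam) \<and>
         bounded_L2_Linf_intop mE (Sb_kernel b lam)"
proof -
  have lam: "lam > 0" by fact
  define c1 where "c1 = (4/pi) * (sqrt lam / 4) powr (-1/4)"
  define I1 where "I1 = (\<integral>\<^sup>+s. ennreal (u_fun (1/4) (sqrt lam / 4) s) \<partial>lborel)"
  define I2 where "I2 = (\<integral>\<^sup>+s. ennreal (u_fun (1/2) (sqrt lam / 2) s) \<partial>lborel)"
  have I1fin: "I1 < \<infinity>" unfolding I1_def using lam by (intro u_fun_fin) auto
  have I2fin: "I2 < \<infinity>" unfolding I2_def using lam by (intro u_fun_fin) auto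
  have c1: "c1 \<ge> 0" unfolding c1_def by simp
  define A where "A = c1 * (enn2real I1)\<^sup>2"
  define B where "B = c1\<^sup>2 * (enn2real I2)\<^sup>2"
  have eA: "ennreal c1 * I1 * I1 = ennreal A"
  proof -
    have "I1 = ennreal (enn2real I1)" using I1fin by (simp add: ennreal_enn2real_if)
    then have "ennreal c1 * I1 * I1 = ennreal c1 * ennreal (enn2real I1) * ennreal (enn2real I1)" by metis
    also have "\<dots> = ennreal A" unfolding A_def using c1
      by (simp add: ennreal_mult power2_eq_square mult.assoc)
    finally show ?thesis .
  qed
  have eB: "ennreal (c1\<^sup>2) * I2 * I2 = ennreal B"
  proof -
    have "I2 = ennreal (enn2real I2)" using I2fin by (simp add: ennreal_enn2real_if)
    then have "ennreal (c1\<^sup>2) * I2 * I2 = ennreal (c1\<^sup>2) * ennreal (enn2real I2) * ennreal (enn2real I2)" by metis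
    also have "\<dots> = ennreal B" unfolding B_def using c1
      by (simp add: ennreal_mult power2_eq_square mult.assoc)
    finally show ?thesis .
  qed
  have ax: "kop_axioms mE (Sb_kernel b lam) (Hk lam) A B"
  proof (rule kop_axioms.intro)
    show "(\<lambda>(x, y). Sb_kernel b lam x y) \<in> borel_measurable (mE \<Otimes>\<^sub>M mE)"
      by (rule mE_pair_meas[OF kernel_meas])
  next
    show "(\<lambda>(x, y). Hk lam x y) \<in> borel_measurable (mE \<Otimes>\<^sub>M mE)"
      by (rule mE_pair_meas[OF Hk_meas])
  next
    show "\<And>x y. 0 \<le> Hk lam x y" by (rule Hk_nonneg)
  next
    fix x assume x: "x \<in> space mE"
    have "AE y in lborel. y \<noteq> x" by (rule AE_lborel_singleton)
    then have "AE y in lborel. y \<in> halfplane \<longrightarrow> cmod (Sb_kernel b lam x y) \<le> Hk lam x y"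
      by eventually_elim (use x lam in \<open>auto intro: kernel_bound\<close>)
    then show "AE y in mE. cmod (Sb_kernel b lam x y) \<le> Hk lam x y"
      unfolding mE_def by (subst AE_restrict_space_iff) (simp_all add: halfplane_sets_borel)
  next
    fix x assume "x \<in> space mE"
    show "(\<integral>\<^sup>+y. ennreal (Hk lam x y) \<partial>mE) \<le> ennreal A"
      using Hk_int1[OF lam, of x] unfolding eA[symmetric] c1_def I1_def .
  next
    fix y assume "y \<in> space mE"
    show "(\<integral>\<^sup>+x. ennreal (Hk lam x y) \<partial>mE) \<le> ennreal A"
      using Hk_int1[OF lam, of y] unfolding eA[symmetric] c1_def I1_def Hk_sym[of lam y] .
  next
    fix x assume "x \<in> space mE"
    show "(\<integral>\<^sup>+y. ennreal ((Hk lam x y)\<^sup>2) \<partial>mE) \<le> ennreal B"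
      using Hk_int2[OF lam, of x] unfolding eB[symmetric] c1_def I2_def .
  next
    show "\<And>x y. x \<in> space mE \<Longrightarrow> y \<in> space mE \<Longrightarrow> Sb_kernel b lam y x = cnj (Sb_kernel b lam x y)"
      by (rule kernel_sym)
  next
    show "0 \<le> A" unfolding A_def using c1 by simp
  next
    show "0 \<le> B" unfolding B_def by simp
  qed
  interpret K: kop mE "Sb_kernel b lam" "Hk lam" A B
    by (rule kop.intro[OF sf_mE ax])
  show ?thesis by (rule K.all3)
qed


end
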